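(* Let $n\ge 2$, $k\ge1$ and $I_*=(i_1,\dots,i_k)\in\{1,\dots,n-1\}^k$. Define the formal power series $$\mathcal{V}_{n,I_*}(t_1,\dots,t_k)=\sum_{(a_1,\dots,a_k)\in\mathbb{N}^k}V_n(x_{i_1}^{a_1}\cdots x_{i_k}^{a_k})\,t_1^{a_1}\cdots t_k^{a_k}.$$ Then it is the rational function $$\mathcal{V}_{n,I_*}(t_1,\dots,t_k)=\frac{1}{q(t_1)\cdots q(t_k)}\sum_{(j_1,\dots,j_k)\in\{0,1\}^k}Q_{j_1}(t_1)\cdots Q_{j_k}(t_k)\,V_n(x_{i_1}^{j_1}\cdots x_{i_k}^{j_k}),$$ where $q(t)=(1-s^3t)(1+st)$, $Q_0(t)=1-(s^3-s)t$ and $Q_1(t)=t$.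
   Context: $\mathcal{B}_n$ is the Artin braid group with standard generators $x_1,\dots,x_{n-1}$; $\widehat{\beta}$ is the closure of $\beta\in\mathcal{B}_n$. The Jones polynomial $V_L$ is normalized by $V(\text{unknot})=1$ and $q^{-1}V_{L_+}-qV_{L_-}=(q^{1/2}-q^{-1/2})V_{L_0}$; with $s=q^{-1/2}$ it is a Laurent polynomial in $s$, and $V_n(\beta)=V(\widehat\beta)$. Conventions: in a braid word, closures of $\alpha x_i^{e+2}\gamma$, $\alpha x_i^{e+1}\gamma$, $\alpha x_i^{e}\gamma$ play the roles of $L_-,L_0,L_+$ (e.g. $V_2(x_1^2)=-s-s^5$). $\mathbb{N}=\{0,1,2,\dots\}$. *)

theory Defs
  imports "HOL-Computational_Algebra.Polynomial" "HOL-Computational_Algebra.Formal_Laurent_Series"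
begin

text \<open>Coefficients live in Z[s,s^-1], realised inside the formal Laurent series over int.\<close>

abbreviation jS :: "int fls" where "jS \<equiv> fls_X"
abbreviation jSinv :: "int fls" where "jSinv \<equiv> fls_X_inv"

text \<open>A braid word is a list of nonzero integers: g > 0 stands for x_g, g < 0 for the inverse of x_(-g).
  A state assigns to every letter a smoothing: False = identity smoothing,
  True = cup-cap (Temperley-Lieb generator) smoothing.  The closure diagram of the
  resolved braid lives on the vertices (l,p), 0 <= l <= m, 1 <= p <= n, where m is the length
  of the word; letter c (0-based) sits between levels c and c+1.\<close>

definition braid_gen :: "int \<Rightarrow> nat" where
  "braid_gen g = nat \<bar>g\<bar>"

definition res_adj :: "nat \<Rightarrow> int list \<Rightarrow> bool list \<Rightarrow> nat \<times> nat \<Rightarrow> nat \<times> nat \<Rightarrow> bool" where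
  "res_adj n w st u v \<longleftrightarrow>
     (let m = length w in
      (\<comment> \<open>vertical strands through letter c\<close>
       (\<exists>c p. c < m \<and> 1 \<le> p \<and> p \<le> n \<and> u = (c, p) \<and> v = (Suc c, p) \<and>
              (\<not> st ! c \<or> (p \<noteq> braid_gen (w ! c) \<and> p \<noteq> Suc (braid_gen (w ! c)))))
     \<or> \<comment> \<open>cap above and cup below letter c when smoothed horizontally\<close>
       (\<exists>c. c < m \<and> st ! c \<and>
              ((u = (c, braid_gen (w ! c)) \<and> v = (c, Suc (braid_gen (w ! c))))
             \<or> (u = (Suc c, braid_gen (w ! c)) \<and> v = (Suc c, Suc (braid_gen (w ! c))))))
     \<or> \<comment> \<open>closure strands\<close>
       (\<exists>p. 1 \<le> p \<and> p \<le> n \<and> u = (m, p) \<and> v = (0, p))))"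

definition res_vertices :: "nat \<Rightarrow> int list \<Rightarrow> (nat \<times> nat) set" where
  "res_vertices n w = {0..length w} \<times> {1..n}"

definition num_loops :: "nat \<Rightarrow> int list \<Rightarrow> bool list \<Rightarrow> nat" where
  "num_loops n w st =
     card {C. \<exists>v \<in> res_vertices n w.
               C = {u. (\<lambda>x y. res_adj n w st x y \<or> res_adj n w st y x)\<^sup>*\<^sup>* v u}}"

text \<open>Weights of the two smoothings, already including the writhe normalisation
  (-A^3)^(-writhe) of the Kauffman bracket, with A^2 = s = q^(-1/2).  In the paper's convention
  x_i is the crossing playing the role of L_- in the skein relation.\<close>
definition smooth_wt :: "int \<Rightarrow> bool \<Rightarrow> int fls" where
  "smooth_wt g b =
     (if 0 < g then (if b then - (jS ^ 2) else - jS)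
      else (if b then - (jSinv ^ 2) else - jSinv))"

definition loop_val :: "int fls" where
  "loop_val = - jS - jSinv"

definition jones_braid :: "nat \<Rightarrow> int list \<Rightarrow> int fls" where
  "jones_braid n w =
     (\<Sum>st \<in> {st :: bool list. length st = length w}.
        (\<Prod>c < length w. smooth_wt (w ! c) (st ! c)) * loop_val ^ (num_loops n w st - 1))"

definition pow_word :: "nat list \<Rightarrow> nat list \<Rightarrow> int list" where
  "pow_word I a = concat (map (\<lambda>j. replicate (a ! j) (int (I ! j))) [0..<length I])"

text \<open>A series is a coefficient function on exponent vectors; only vectors of length k matter.\<close>
type_synonym 'a mps = "nat list \<Rightarrow> 'a"

definition mps_eq :: "nat \<Rightarrow> 'a mps \<Rightarrow> 'a mps \<Rightarrow> bool" where
  "mps_eq k f g \<longleftrightarrow> (\<forall>a. length a = k \<longrightarrow> f a = g a)"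

definition mps_mult :: "nat \<Rightarrow> ('a::comm_ring_1) mps \<Rightarrow> 'a mps \<Rightarrow> 'a mps" where
  "mps_mult k f g a =
     (\<Sum>b \<in> {b. length b = k \<and> (\<forall>j<k. b ! j \<le> a ! j)}.
        f b * g (map (\<lambda>j. a ! j - b ! j) [0..<k]))"

definition mps_one :: "nat \<Rightarrow> ('a::comm_ring_1) mps" where
  "mps_one k a = (if a = replicate k 0 then 1 else 0)"

definition mps_prod_list :: "nat \<Rightarrow> ('a::comm_ring_1) mps list \<Rightarrow> 'a mps" where
  "mps_prod_list k fs = foldr (mps_mult k) fs (mps_one k)"

definition mps_upoly :: "nat \<Rightarrow> nat \<Rightarrow> ('a::comm_ring_1) poly \<Rightarrow> 'a mps" where
  "mps_upoly k j p a = (if \<forall>l<k. l \<noteq> j \<longrightarrow> a ! l = 0 then coeff p (a ! j) else 0)"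

definition mps_smult :: "'a::comm_ring_1 \<Rightarrow> 'a mps \<Rightarrow> 'a mps" where
  "mps_smult c f a = c * f a"

definition jones_series :: "nat \<Rightarrow> nat list \<Rightarrow> int fls mps" where
  "jones_series n I a = jones_braid n (pow_word I a)"

definition q_poly :: "int fls poly" where
  "q_poly = [:1, - (jS ^ 3):] * [:1, jS:]"

definition Q_poly :: "nat \<Rightarrow> int fls poly" where
  "Q_poly j = (if j = 0 then [:1, - (jS ^ 3 - jS):] else [:0, 1:])"

end

theory Submission
  imports Defs
begin


definition symc :: "('a \<Rightarrow> 'a \<Rightarrow> bool) \<Rightarrow> 'a \<Rightarrow> 'a \<Rightarrow> bool" where
  "symc R x y \<longleftrightarrow> R x y \<or> R y x"

definition comps :: "('a \<Rightarrow> 'a \<Rightarrow> bool) \<Rightarrow> 'a set \<Rightarrow> 'a set set" where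
  "comps R V = {C. \<exists>v\<in>V. C = {u. (symc R)\<^sup>*\<^sup>* v u}}"

lemma symc_sym: "symc R x y \<Longrightarrow> symc R y x" by (auto simp: symc_def)

lemma symc_rtr_sym: "(symc R)\<^sup>*\<^sup>* x y \<Longrightarrow> (symc R)\<^sup>*\<^sup>* y x"
  by (induction rule: rtranclp_induct) (auto intro: converse_rtranclp_into_rtranclp symc_sym)

lemma card_image_eq_rel:
  assumes "\<And>x y. x \<in> V \<Longrightarrow> y \<in> V \<Longrightarrow> g1 x = g1 y \<longleftrightarrow> g2 x = g2 y"
  shows "card (g1 ` V) = card (g2 ` V)"
proof -
  define h where "h = (\<lambda>c. g2 (inv_into V g1 c))"
  have img: "h ` (g1 ` V) = g2 ` V"
  proof -
    have "h (g1 x) = g2 x" if "x \<in> V" for x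
    proof -
      have "inv_into V g1 (g1 x) \<in> V" "g1 (inv_into V g1 (g1 x)) = g1 x"
        using that by (auto intro: inv_into_into f_inv_into_f)
      then show ?thesis using assms that unfolding h_def by blast
    qed
    then show ?thesis by (force simp: image_image)
  qed
  have inj: "inj_on h (g1 ` V)"
  proof (rule inj_onI)
    fix a b assume "a \<in> g1 ` V" "b \<in> g1 ` V" "h a = h b"
    then obtain x y where xy: "x \<in> V" "y \<in> V" "a = g1 x" "b = g1 y" by auto
    have i1: "inv_into V g1 (g1 x) \<in> V" "g1 (inv_into V g1 (g1 x)) = g1 x"
      using xy by (auto intro: inv_into_into f_inv_into_f)
    have i2: "inv_into V g1 (g1 y) \<in> V" "g1 (inv_into V g1 (g1 y)) = g1 y"
      using xy by (auto intro: inv_into_into f_inv_into_f)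
    have "g2 (inv_into V g1 (g1 x)) = g2 (inv_into V g1 (g1 y))"
      using \<open>h a = h b\<close> xy unfolding h_def by simp
    then have "g1 (inv_into V g1 (g1 x)) = g1 (inv_into V g1 (g1 y))"
      using assms i1 i2 by blast
    then show "a = b" using i1 i2 xy by simp
  qed
  show ?thesis using card_image[OF inj] img by simp
qed

lemma comp_eq_iff:
  "{u. (symc R)\<^sup>*\<^sup>* v u} = {u. (symc R)\<^sup>*\<^sup>* w u} \<longleftrightarrow> (symc R)\<^sup>*\<^sup>* v w"
proof
  assume "{u. (symc R)\<^sup>*\<^sup>* v u} = {u. (symc R)\<^sup>*\<^sup>* w u}"
  then show "(symc R)\<^sup>*\<^sup>* v w" by (metis (mono_tags) mem_Collect_eq rtranclp.rtrancl_refl)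
next
  assume h: "(symc R)\<^sup>*\<^sup>* v w"
  then have h': "(symc R)\<^sup>*\<^sup>* w v" by (rule symc_rtr_sym)
  show "{u. (symc R)\<^sup>*\<^sup>* v u} = {u. (symc R)\<^sup>*\<^sup>* w u}"
    using h h' by (auto intro: rtranclp_trans)
qed

lemma comps_image: "comps R V = (\<lambda>v. {u. (symc R)\<^sup>*\<^sup>* v u}) ` V"
  unfolding comps_def by auto

lemma card_comps_eq:
  fixes f :: "'a \<Rightarrow> 'b"
  assumes clV: "\<And>x y. x \<in> V \<Longrightarrow> symc R x y \<Longrightarrow> y \<in> V"
    and clV': "\<And>x y. x \<in> V' \<Longrightarrow> symc R' x y \<Longrightarrow> y \<in> V'"
    and fV: "f ` V = V'"
    and fwd: "\<And>x y. x \<in> V \<Longrightarrow> y \<in> V \<Longrightarrow> R x y \<Longrightarrow> f x = f y \<or> symc R' (f x) (f y)"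
    and bwd: "\<And>x' y'. x' \<in> V' \<Longrightarrow> y' \<in> V' \<Longrightarrow> R' x' y' \<Longrightarrow>
                 \<exists>x\<in>V. \<exists>y\<in>V. f x = x' \<and> f y = y' \<and> (symc R)\<^sup>*\<^sup>* x y"
    and fib: "\<And>x y. x \<in> V \<Longrightarrow> y \<in> V \<Longrightarrow> f x = f y \<Longrightarrow> (symc R)\<^sup>*\<^sup>* x y"
  shows "card (comps R V) = card (comps R' V')"
proof -
  have F: "(symc R')\<^sup>*\<^sup>* (f x) (f y)" if "(symc R)\<^sup>*\<^sup>* x y" "x \<in> V" for x y
    using that
  proof (induction rule: rtranclp_induct)
    case base then show ?case by simp
  next
    case (step y z)
    have yV: "y \<in> V"
      using step.hyps(1) step.prems clV by (induction rule: rtranclp_induct) auto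
    have zV: "z \<in> V" using clV yV step.hyps(2) by blast
    have "f y = f z \<or> symc R' (f y) (f z)"
      using step.hyps(2) fwd[OF yV zV] fwd[OF zV yV] symc_sym unfolding symc_def by metis
    then show ?case using step by (auto intro: rtranclp.rtrancl_into_rtrancl)
  qed
  have B: "\<forall>x\<in>V. \<forall>y\<in>V. f x = x' \<longrightarrow> f y = y' \<longrightarrow> (symc R)\<^sup>*\<^sup>* x y"
    if "(symc R')\<^sup>*\<^sup>* x' y'" "x' \<in> V'" for x' y'
    using that
  proof (induction rule: rtranclp_induct)
    case base then show ?case using fib by blast
  next
    case (step y' z')
    have yV: "y' \<in> V'"
      using step.hyps(1) step.prems clV' by (induction rule: rtranclp_induct) auto
    have zV: "z' \<in> V'" using clV' yV step.hyps(2) by blast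
    have "\<exists>y0\<in>V. \<exists>z0\<in>V. f y0 = y' \<and> f z0 = z' \<and> (symc R)\<^sup>*\<^sup>* y0 z0"
    proof (cases "R' y' z'")
      case True then show ?thesis using bwd[OF yV zV] by blast
    next
      case False
      then have "R' z' y'" using step.hyps(2) by (auto simp: symc_def)
      then have "\<exists>z0\<in>V. \<exists>y0\<in>V. f z0 = z' \<and> f y0 = y' \<and> (symc R)\<^sup>*\<^sup>* z0 y0"
        by (rule bwd[OF zV yV])
      then obtain z0 y0 where h: "z0 \<in> V" "y0 \<in> V" "f z0 = z'" "f y0 = y'" "(symc R)\<^sup>*\<^sup>* z0 y0"
        by blast
      have "(symc R)\<^sup>*\<^sup>* y0 z0" using h(5) by (rule symc_rtr_sym)
      then show ?thesis using h by blast
    qed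
    then obtain y0 z0 where yz: "y0 \<in> V" "z0 \<in> V" "f y0 = y'" "f z0 = z'" "(symc R)\<^sup>*\<^sup>* y0 z0"
      by blast
    show ?case
    proof (intro ballI impI)
      fix x y assume "x \<in> V" "y \<in> V" "f x = x'" "f y = z'"
      then have "(symc R)\<^sup>*\<^sup>* x y0" using step.IH step.prems yz by blast
      moreover have "(symc R)\<^sup>*\<^sup>* z0 y" using fib yz \<open>y \<in> V\<close> \<open>f y = z'\<close> by metis
      ultimately show "(symc R)\<^sup>*\<^sup>* x y" using yz(5) by (meson rtranclp_trans)
    qed
  qed
  have eqv: "{u. (symc R)\<^sup>*\<^sup>* x u} = {u. (symc R)\<^sup>*\<^sup>* y u} \<longleftrightarrow>
     {u. (symc R')\<^sup>*\<^sup>* (f x) u} = {u. (symc R')\<^sup>*\<^sup>* (f y) u}" if "x \<in> V" "y \<in> V" for x y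
    unfolding comp_eq_iff using F B that fV by blast
  have "card (comps R' V') = card ((\<lambda>v. {u. (symc R')\<^sup>*\<^sup>* (f v) u}) ` V)"
    unfolding comps_image fV[symmetric] image_image ..
  also have "\<dots> = card (comps R V)"
    unfolding comps_image by (rule card_image_eq_rel) (use eqv in auto)
  finally show ?thesis by simp
qed

lemma card_comps_split:
  assumes "L0 \<subseteq> V" "v0 \<in> L0" "finite V"
    and cl: "\<And>x y. x \<in> L0 \<Longrightarrow> symc R x y \<Longrightarrow> y \<in> L0"
    and con: "\<And>x. x \<in> L0 \<Longrightarrow> (symc R)\<^sup>*\<^sup>* v0 x"
  shows "card (comps R V) = card (comps R (V - L0)) + 1"
proof -
  have cL: "{u. (symc R)\<^sup>*\<^sup>* v u} = L0" if "v \<in> L0" for v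
  proof
    show "{u. (symc R)\<^sup>*\<^sup>* v u} \<subseteq> L0"
    proof
      fix u assume "u \<in> {u. (symc R)\<^sup>*\<^sup>* v u}"
      then have "(symc R)\<^sup>*\<^sup>* v u" by simp
      then show "u \<in> L0" using that by (induction rule: rtranclp_induct) (auto intro: cl)
    qed
    show "L0 \<subseteq> {u. (symc R)\<^sup>*\<^sup>* v u}"
    proof
      fix u assume "u \<in> L0"
      have "(symc R)\<^sup>*\<^sup>* v v0" using con[OF that] by (rule symc_rtr_sym)
      then have "(symc R)\<^sup>*\<^sup>* v u" using con[OF \<open>u \<in> L0\<close>] by (rule rtranclp_trans)
      then show "u \<in> {u. (symc R)\<^sup>*\<^sup>* v u}" by simp
    qed
  qed
  have "comps R V = insert L0 (comps R (V - L0))"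
    unfolding comps_image using assms(1,2) cL by auto
  moreover have "L0 \<notin> comps R (V - L0)"
  proof
    assume "L0 \<in> comps R (V - L0)"
    then obtain v where "v \<in> V - L0" "L0 = {u. (symc R)\<^sup>*\<^sup>* v u}" unfolding comps_def by blast
    then show False by auto
  qed
  moreover have "finite (comps R (V - L0))" unfolding comps_image using assms(3) by simp
  ultimately show ?thesis by simp
qed



definition adjG :: "nat \<Rightarrow> nat \<Rightarrow> (nat \<Rightarrow> nat) \<Rightarrow> (nat \<Rightarrow> bool) \<Rightarrow> nat \<times> nat \<Rightarrow> nat \<times> nat \<Rightarrow> bool" where
  "adjG n m G B u v \<longleftrightarrow>
      (\<exists>c p. c < m \<and> 1 \<le> p \<and> p \<le> n \<and> u = (c, p) \<and> v = (Suc c, p) \<and>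
              (\<not> B c \<or> (p \<noteq> G c \<and> p \<noteq> Suc (G c))))
     \<or> (\<exists>c. c < m \<and> B c \<and>
              ((u = (c, G c) \<and> v = (c, Suc (G c)))
             \<or> (u = (Suc c, G c) \<and> v = (Suc c, Suc (G c)))))
     \<or> (\<exists>p. 1 \<le> p \<and> p \<le> n \<and> u = (m, p) \<and> v = (0, p))"

lemma res_adj_adjG: "res_adj n w st = adjG n (length w) (\<lambda>c. braid_gen (w ! c)) (\<lambda>c. st ! c)"
  unfolding res_adj_def adjG_def by (intro ext) (simp add: Let_def)

lemma adjG_iff: "adjG n m G B (l1, p1) (l2, p2) \<longleftrightarrow>
 (l1 < m \<and> l2 = Suc l1 \<and> p2 = p1 \<and> 1 \<le> p1 \<and> p1 \<le> n \<and> (\<not> B l1 \<or> (p1 \<noteq> G l1 \<and> p1 \<noteq> Suc (G l1)))) \<or>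
 (l2 = l1 \<and> l1 < m \<and> B l1 \<and> p1 = G l1 \<and> p2 = Suc (G l1)) \<or>
 (l2 = l1 \<and> 0 < l1 \<and> l1 \<le> m \<and> B (l1 - 1) \<and> p1 = G (l1 - 1) \<and> p2 = Suc (G (l1 - 1))) \<or>
 (l1 = m \<and> l2 = 0 \<and> p2 = p1 \<and> 1 \<le> p1 \<and> p1 \<le> n)"
  unfolding adjG_def
  apply (rule iffI)
   apply (elim disjE exE; force)
  apply (elim disjE)
     apply blast
    apply blast
   apply (rule disjI2, rule disjI1, rule exI[of _ "l1 - 1"], force)
  apply blast
  done

definition Vs :: "nat \<Rightarrow> nat \<Rightarrow> (nat \<times> nat) set" where
  "Vs n m = {0..m} \<times> {1..n}"

lemma finite_Vs: "finite (Vs n m)" unfolding Vs_def by simp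

lemma adjG_in_V:
  assumes "\<And>i. i < m \<Longrightarrow> 1 \<le> G i \<and> G i < n" "adjG n m G B u v"
  shows "u \<in> Vs n m \<and> v \<in> Vs n m"
proof -
  obtain l1 p1 l2 p2 where "u = (l1,p1)" "v = (l2,p2)" by fastforce
  moreover have "adjG n m G B (l1,p1) (l2,p2)" using assms(2) calculation by simp
  ultimately show ?thesis unfolding adjG_iff Vs_def
    using assms(1)[of l1] assms(1)[of "l1 - 1"] by (auto; (subgoal_tac "l1 - 1 < m", force, linarith))
qed

lemma symc_adjG_in_V:
  assumes "\<And>i. i < m \<Longrightarrow> 1 \<le> G i \<and> G i < n" "symc (adjG n m G B) u v"
  shows "v \<in> Vs n m"
  using assms(2) adjG_in_V[of m G n B u v, OF assms(1)] adjG_in_V[of m G n B v u, OF assms(1)]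
  unfolding symc_def by blast



lemma lift_edge:
  assumes "\<And>i. i < m \<Longrightarrow> 1 \<le> G i \<and> G i < n" "adjG n m G B x y" "f x = x'" "f y = y'"
  shows "\<exists>x\<in>Vs n m. \<exists>y\<in>Vs n m. f x = x' \<and> f y = y' \<and> (symc (adjG n m G B))\<^sup>*\<^sup>* x y"
proof -
  have "symc (adjG n m G B) x y" using assms(2) by (simp add: symc_def)
  then show ?thesis using assms adjG_in_V[OF assms(1,2)] by blast
qed

lemma del_F:
  assumes c: "c \<le> m"
    and G: "\<And>i. G i = (if i < c then G2 i else if i = c then gx else G2 (i-1))"
    and B: "\<And>i. B i = (if i < c then B2 i else if i = c then False else B2 (i-1))"
    and bd: "\<And>i. i < Suc m \<Longrightarrow> 1 \<le> G i \<and> G i < n"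
  shows "card (comps (adjG n (Suc m) G B) (Vs n (Suc m))) = card (comps (adjG n m G2 B2) (Vs n m))"
proof -
  have bd2: "1 \<le> G2 i \<and> G2 i < n" if "i < m" for i
  proof (cases "i < c")
    case True then show ?thesis using bd[of i] G[of i] that by simp
  next
    case False then show ?thesis using bd[of "Suc i"] G[of "Suc i"] that by simp
  qed
  define f :: "nat \<times> nat \<Rightarrow> nat \<times> nat" where "f = (\<lambda>(l,p). (if l \<le> c then l else l - 1, p))"
  show ?thesis
  proof (rule card_comps_eq[where f = f])
    show "\<And>x y. x \<in> Vs n (Suc m) \<Longrightarrow> symc (adjG n (Suc m) G B) x y \<Longrightarrow> y \<in> Vs n (Suc m)"
      using symc_adjG_in_V[of "Suc m" G n B, OF bd] by blast
    show "\<And>x y. x \<in> Vs n m \<Longrightarrow> symc (adjG n m G2 B2) x y \<Longrightarrow> y \<in> Vs n m"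
      using symc_adjG_in_V[of m G2 n B2, OF bd2] by blast
    show "f ` Vs n (Suc m) = Vs n m"
    proof
      show "f ` Vs n (Suc m) \<subseteq> Vs n m" using c by (auto simp: f_def Vs_def)
      show "Vs n m \<subseteq> f ` Vs n (Suc m)"
      proof
        fix x assume "x \<in> Vs n m"
        then obtain l p where x: "x = (l,p)" "l \<le> m" "1 \<le> p" "p \<le> n" by (auto simp: Vs_def)
        show "x \<in> f ` Vs n (Suc m)"
        proof (cases "l \<le> c")
          case True
          then have "f (l,p) = x" using x by (simp add: f_def)
          moreover have "(l,p) \<in> Vs n (Suc m)" using x by (simp add: Vs_def)
          ultimately show ?thesis by (metis image_eqI)
        next
          case False
          then have "f (Suc l,p) = x" using x by (simp add: f_def)
          moreover have "(Suc l,p) \<in> Vs n (Suc m)" using x by (simp add: Vs_def)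
          ultimately show ?thesis by (metis image_eqI)
        qed
      qed
    qed
    show "f x = f y \<or> symc (adjG n m G2 B2) (f x) (f y)"
      if "x \<in> Vs n (Suc m)" "y \<in> Vs n (Suc m)" "adjG n (Suc m) G B x y" for x y
    proof -
      obtain l1 p1 l2 p2 where xy: "x = (l1,p1)" "y = (l2,p2)" by fastforce
      have e: "adjG n (Suc m) G B (l1,p1) (l2,p2)" using that xy by simp
      have "f (l1,p1) = f (l2,p2) \<or> adjG n m G2 B2 (f (l1,p1)) (f (l2,p2))"
      proof -
        consider (v) "l1 < Suc m \<and> l2 = Suc l1 \<and> p2 = p1 \<and> 1 \<le> p1 \<and> p1 \<le> n \<and> (\<not> B l1 \<or> (p1 \<noteq> G l1 \<and> p1 \<noteq> Suc (G l1)))"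
          | (cap) "l2 = l1 \<and> l1 < Suc m \<and> B l1 \<and> p1 = G l1 \<and> p2 = Suc (G l1)"
          | (cup) "l2 = l1 \<and> 0 < l1 \<and> l1 \<le> Suc m \<and> B (l1 - 1) \<and> p1 = G (l1 - 1) \<and> p2 = Suc (G (l1 - 1))"
          | (cl) "l1 = Suc m \<and> l2 = 0 \<and> p2 = p1 \<and> 1 \<le> p1 \<and> p1 \<le> n"
          using e unfolding adjG_iff by blast
        then show ?thesis
        proof cases
          case v
          consider "l1 < c" | "l1 = c" | "c < l1" by linarith
          then show ?thesis
          proof cases
            case 1
            then have "l1 < m" "Suc l1 \<le> c" using c by auto
            then show ?thesis using v 1 G[of l1] B[of l1] by (simp add: adjG_iff f_def)
          next
            case 2 then show ?thesis using v by (simp add: f_def)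
          next
            case 3
            then have "l1 - 1 < m" "l1 = Suc (l1 - 1)" "\<not> Suc l1 \<le> c" "\<not> l1 \<le> c" using v by auto
            then show ?thesis using v 3 G[of l1] B[of l1] by (simp add: adjG_iff f_def)
          qed
        next
          case cap
          have "l1 \<noteq> c" using cap B[of l1] by auto
          then consider "l1 < c" | "c < l1" by linarith
          then show ?thesis
          proof cases
            case 1
            then have "l1 < m" "l1 \<le> c" using c by auto
            then show ?thesis using cap 1 G[of l1] B[of l1] by (simp add: adjG_iff f_def)
          next
            case 2
            then have "l1 - 1 < m" "\<not> l1 \<le> c" "\<not> l1 < c" "l1 \<noteq> c" using cap by auto
            then show ?thesis using cap 2 G[of l1] B[of l1] by (simp add: adjG_iff f_def)
          qed
        next
          case cup
          have "l1 - 1 \<noteq> c" using cup B[of "l1 - 1"] by auto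
          then consider "l1 \<le> c" | "Suc c < l1" using cup by linarith
          then show ?thesis
          proof cases
            case 1
            then have "l1 \<le> m" "l1 - 1 < c" using c cup by auto
            then show ?thesis using cup 1 G[of "l1 - 1"] B[of "l1 - 1"] by (simp add: adjG_iff f_def)
          next
            case 2
            then have "l1 - 1 \<le> m" "\<not> l1 \<le> c" "\<not> l1 - 1 < c" "l1 - 1 \<noteq> c" "0 < l1 - 1"
              "l1 - 1 - 1 = l1 - 1 - 1" using cup by auto
            then show ?thesis using cup 2 G[of "l1 - 1"] B[of "l1 - 1"] by (simp add: adjG_iff f_def)
          qed
        next
          case cl then show ?thesis using c by (simp add: adjG_iff f_def)
        qed
      qed
      then show ?thesis using xy by (auto simp: symc_def)
    qed
    show "\<exists>x\<in>Vs n (Suc m). \<exists>y\<in>Vs n (Suc m). f x = x' \<and> f y = y' \<and> (symc (adjG n (Suc m) G B))\<^sup>*\<^sup>* x y"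
      if "x' \<in> Vs n m" "y' \<in> Vs n m" "adjG n m G2 B2 x' y'" for x' y'
    proof -
      obtain l1 p1 l2 p2 where xy: "x' = (l1,p1)" "y' = (l2,p2)" by fastforce
      have e: "adjG n m G2 B2 (l1,p1) (l2,p2)" using that xy by simp
      have "\<exists>a b. adjG n (Suc m) G B a b \<and> f a = (l1,p1) \<and> f b = (l2,p2)"
      proof -
        consider (v) "l1 < m \<and> l2 = Suc l1 \<and> p2 = p1 \<and> 1 \<le> p1 \<and> p1 \<le> n \<and> (\<not> B2 l1 \<or> (p1 \<noteq> G2 l1 \<and> p1 \<noteq> Suc (G2 l1)))"
          | (cap) "l2 = l1 \<and> l1 < m \<and> B2 l1 \<and> p1 = G2 l1 \<and> p2 = Suc (G2 l1)"
          | (cup) "l2 = l1 \<and> 0 < l1 \<and> l1 \<le> m \<and> B2 (l1 - 1) \<and> p1 = G2 (l1 - 1) \<and> p2 = Suc (G2 (l1 - 1))"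
          | (cl) "l1 = m \<and> l2 = 0 \<and> p2 = p1 \<and> 1 \<le> p1 \<and> p1 \<le> n"
          using e unfolding adjG_iff by blast
        then show ?thesis
        proof cases
          case v then show ?thesis
          proof (cases "l1 < c")
            case True
            then show ?thesis using v c
              by (intro exI[of _ "(l1,p1)"] exI[of _ "(l2,p2)"]) (simp add: adjG_iff G B f_def)
          next
            case False
            then show ?thesis using v c
              by (intro exI[of _ "(Suc l1,p1)"] exI[of _ "(Suc l2,p2)"]) (simp add: adjG_iff G B f_def)
          qed
        next
          case cap then show ?thesis
          proof (cases "l1 < c")
            case True
            then show ?thesis using cap c
              by (intro exI[of _ "(l1,p1)"] exI[of _ "(l2,p2)"]) (simp add: adjG_iff G B f_def)
          next
            case False
            then show ?thesis using cap c
              by (intro exI[of _ "(Suc l1,p1)"] exI[of _ "(Suc l2,p2)"]) (simp add: adjG_iff G B f_def)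
          qed
        next
          case cup then show ?thesis
          proof (cases "l1 \<le> c")
            case True
            then have "l1 - 1 < c" using cup by auto
            then show ?thesis using cup c True
              by (intro exI[of _ "(l1,p1)"] exI[of _ "(l2,p2)"]) (simp add: adjG_iff G B f_def)
          next
            case False
            then show ?thesis using cup c
              by (intro exI[of _ "(Suc l1,p1)"] exI[of _ "(Suc l2,p2)"]) (simp add: adjG_iff G B f_def)
          qed
        next
          case cl then show ?thesis using c
            by (intro exI[of _ "(Suc m,p1)"] exI[of _ "(0,p2)"]) (simp add: adjG_iff G B f_def)
        qed
      qed
      then obtain a b where ab: "adjG n (Suc m) G B a b" "f a = (l1,p1)" "f b = (l2,p2)" by blast
      show ?thesis using lift_edge[of "Suc m" G n B a b f x' y', OF bd ab(1)] ab xy by simp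
    qed
    show "(symc (adjG n (Suc m) G B))\<^sup>*\<^sup>* x y"
      if "x \<in> Vs n (Suc m)" "y \<in> Vs n (Suc m)" "f x = f y" for x y
    proof -
      obtain l1 p1 l2 p2 where xy: "x = (l1,p1)" "y = (l2,p2)" by fastforce
      have p: "p1 = p2" "1 \<le> p1" "p1 \<le> n" using that xy by (auto simp: f_def Vs_def split: if_splits)
      have "l1 = l2 \<or> (l1 = c \<and> l2 = Suc c) \<or> (l2 = c \<and> l1 = Suc c)"
        using that xy by (auto simp: f_def split: if_splits)
      moreover have "adjG n (Suc m) G B (c,p1) (Suc c, p1)"
        using p c by (simp add: adjG_iff B)
      ultimately show ?thesis using xy p
        by (auto simp: symc_def intro: r_into_rtranclp)
    qed
  qed
qed



lemma loop_closed1: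
  assumes "G c = g" "G (Suc c) = g" "B c" "B (Suc c)" "Suc c < M" "p1 = g \<or> p1 = Suc g"
    "adjG n M G B (Suc c,p1) (l2,p2)"
  shows "l2 = Suc c \<and> (p2 = g \<or> p2 = Suc g)"
  using assms(7) unfolding adjG_iff using assms(1-6) by auto
lemma loop_closed2:
  assumes "G c = g" "G (Suc c) = g" "B c" "B (Suc c)" "Suc c < M" "p1 = g \<or> p1 = Suc g"
    "adjG n M G B (l2,p2) (Suc c,p1)"
  shows "l2 = Suc c \<and> (p2 = g \<or> p2 = Suc g)"
proof -
  consider "l2 = c" | "l2 = Suc c" | "l2 \<noteq> c \<and> l2 \<noteq> Suc c" by blast
  then show ?thesis
  proof cases
    case 1
    have "adjG n M G B (c,p2) (Suc c,p1)" using assms(7) 1 by simp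
    then show ?thesis unfolding adjG_iff using assms(1-6) by auto
  next
    case 2
    have "adjG n M G B (Suc c,p2) (Suc c,p1)" using assms(7) 2 by simp
    then show ?thesis unfolding adjG_iff using assms(1-6) 2 by auto
  next
    case 3
    then show ?thesis using assms(7) unfolding adjG_iff by auto
  qed
qed

lemma del_TT:
  assumes c: "c \<le> m"
    and G: "\<And>i. G i = (if i \<le> c then G2 i else G2 (i-1))"
    and B: "\<And>i. B i = (if i \<le> c then B2 i else B2 (i-1))"
    and Bc: "B2 c"
    and bd: "\<And>i. i < Suc (Suc m) \<Longrightarrow> 1 \<le> G i \<and> G i < n"
  shows "card (comps (adjG n (Suc (Suc m)) G B) (Vs n (Suc (Suc m)))) =
         card (comps (adjG n (Suc m) G2 B2) (Vs n (Suc m))) + 1"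
proof -
  define g where "g = G2 c"
  define L0 where "L0 = {(Suc c, g), (Suc c, Suc g)}"
  define V where "V = Vs n (Suc (Suc m))"
  define R where "R = adjG n (Suc (Suc m)) G B"
  have Gc: "G c = g" "G (Suc c) = g" and Bc': "B c" "B (Suc c)"
    using G[of c] G[of "Suc c"] B[of c] B[of "Suc c"] Bc by (auto simp: g_def)
  have Gcc: "\<And>i. i = c \<Longrightarrow> G i = g" "\<And>i. i = Suc c \<Longrightarrow> G i = g"
    "\<And>i. i = c \<Longrightarrow> B i" "\<And>i. i = Suc c \<Longrightarrow> B i" using Gc Bc' by auto
  have gb: "1 \<le> g" "g < n" using bd[of c] c Gc by auto
  have bd2: "1 \<le> G2 i \<and> G2 i < n" if "i < Suc m" for i
  proof (cases "i \<le> c")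
    case True then show ?thesis using bd[of i] G[of i] that by simp
  next
    case False then show ?thesis using bd[of "Suc i"] G[of "Suc i"] that by simp
  qed
  have clL0: "y \<in> L0" if hx: "x \<in> L0" and hs: "symc R x y" for x y
  proof -
    obtain l2 p2 where y: "y = (l2,p2)" by fastforce
    obtain p1 where x: "x = (Suc c, p1)" "p1 = g \<or> p1 = Suc g" using hx unfolding L0_def by blast
    have "R (Suc c, p1) (l2,p2) \<or> R (l2,p2) (Suc c, p1)" using hs x y by (simp add: symc_def)
    then show ?thesis
    proof
      assume "R (Suc c, p1) (l2,p2)"
      then show ?thesis using loop_closed1[of G c g B "Suc (Suc m)" p1 n l2 p2] Gc Bc' c x y
        by (auto simp: R_def L0_def)
    next
      assume "R (l2,p2) (Suc c, p1)"
      then show ?thesis using loop_closed2[of G c g B "Suc (Suc m)" p1 n l2 p2] Gc Bc' c x y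
        by (auto simp: R_def L0_def)
    qed
  qed
  have split: "card (comps R V) = card (comps R (V - L0)) + 1"
  proof (rule card_comps_split[where ?v0.0 = "(Suc c, g)"])
    show "L0 \<subseteq> V" using gb c by (auto simp: L0_def V_def Vs_def)
    show "(Suc c, g) \<in> L0" by (simp add: L0_def)
    show "finite V" by (simp add: V_def finite_Vs)
    show "\<And>x y. x \<in> L0 \<Longrightarrow> symc R x y \<Longrightarrow> y \<in> L0" by (rule clL0)
    have e: "R (Suc c, g) (Suc c, Suc g)" using Gc Bc' c by (simp add: R_def adjG_iff)
    show "(symc R)\<^sup>*\<^sup>* (Suc c, g) x" if "x \<in> L0" for x
      using that e by (auto simp: L0_def symc_def intro: r_into_rtranclp)
  qed
  define f :: "nat \<times> nat \<Rightarrow> nat \<times> nat" where "f = (\<lambda>(l,p). (if l \<le> c then l else l - 1, p))"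
  have "card (comps R (V - L0)) = card (comps (adjG n (Suc m) G2 B2) (Vs n (Suc m)))"
  proof (rule card_comps_eq[where f = f])
    show "y \<in> V - L0" if "x \<in> V - L0" "symc R x y" for x y
    proof -
      have "y \<in> V" using symc_adjG_in_V[of "Suc (Suc m)" G n B, OF bd] that unfolding R_def V_def by blast
      moreover have "y \<notin> L0"
      proof
        assume "y \<in> L0"
        moreover have "symc R y x" using that(2) by (rule symc_sym)
        ultimately have "x \<in> L0" by (rule clL0)
        then show False using that(1) by simp
      qed
      ultimately show ?thesis by blast
    qed
    show "\<And>x y. x \<in> Vs n (Suc m) \<Longrightarrow> symc (adjG n (Suc m) G2 B2) x y \<Longrightarrow> y \<in> Vs n (Suc m)"
      using symc_adjG_in_V[of "Suc m" G2 n B2, OF bd2] by blast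
    show "f ` (V - L0) = Vs n (Suc m)"
    proof
      show "f ` (V - L0) \<subseteq> Vs n (Suc m)" using c by (auto simp: f_def Vs_def V_def)
      show "Vs n (Suc m) \<subseteq> f ` (V - L0)"
      proof
        fix x assume "x \<in> Vs n (Suc m)"
        then obtain l p where x: "x = (l,p)" "l \<le> Suc m" "1 \<le> p" "p \<le> n" by (auto simp: Vs_def)
        show "x \<in> f ` (V - L0)"
        proof (cases "l \<le> c")
          case True
          then have "f (l,p) = x" using x by (simp add: f_def)
          moreover have "(l,p) \<in> V - L0" using x True by (simp add: Vs_def V_def L0_def)
          ultimately show ?thesis by (metis image_eqI)
        next
          case False
          then have "f (Suc l,p) = x" using x by (simp add: f_def)
          moreover have "(Suc l,p) \<in> V - L0" using x False by (simp add: Vs_def V_def L0_def)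
          ultimately show ?thesis by (metis image_eqI)
        qed
      qed
    qed
    show "f x = f y \<or> symc (adjG n (Suc m) G2 B2) (f x) (f y)"
      if "x \<in> V - L0" "y \<in> V - L0" "R x y" for x y
    proof -
      obtain l1 p1 l2 p2 where xy: "x = (l1,p1)" "y = (l2,p2)" by fastforce
      have e: "adjG n (Suc (Suc m)) G B (l1,p1) (l2,p2)" using that xy by (simp add: R_def)
      have nL: "(l1,p1) \<notin> L0" using that xy by simp
      have "f (l1,p1) = f (l2,p2) \<or> adjG n (Suc m) G2 B2 (f (l1,p1)) (f (l2,p2))"
      proof -
        consider (v) "l1 < Suc (Suc m) \<and> l2 = Suc l1 \<and> p2 = p1 \<and> 1 \<le> p1 \<and> p1 \<le> n \<and> (\<not> B l1 \<or> (p1 \<noteq> G l1 \<and> p1 \<noteq> Suc (G l1)))"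
          | (cap) "l2 = l1 \<and> l1 < Suc (Suc m) \<and> B l1 \<and> p1 = G l1 \<and> p2 = Suc (G l1)"
          | (cup) "l2 = l1 \<and> 0 < l1 \<and> l1 \<le> Suc (Suc m) \<and> B (l1 - 1) \<and> p1 = G (l1 - 1) \<and> p2 = Suc (G (l1 - 1))"
          | (cl) "l1 = Suc (Suc m) \<and> l2 = 0 \<and> p2 = p1 \<and> 1 \<le> p1 \<and> p1 \<le> n"
          using e unfolding adjG_iff by blast
        then show ?thesis
        proof cases
          case v
          consider "l1 < c" | "l1 = c" | "c < l1" by linarith
          then show ?thesis
          proof cases
            case 1
            then have "l1 < Suc m" "Suc l1 \<le> c" "l1 \<le> c" using c by auto
            then show ?thesis using v 1 G[of l1] B[of l1] by (simp add: adjG_iff f_def)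
          next
            case 2 then show ?thesis using v by (simp add: f_def)
          next
            case 3
            then have "l1 - 1 < Suc m" "l1 = Suc (l1 - 1)" "\<not> Suc l1 \<le> c" "\<not> l1 \<le> c" using v by auto
            then show ?thesis using v 3 G[of l1] B[of l1] by (simp add: adjG_iff f_def)
          qed
        next
          case cap
          have "l1 \<noteq> Suc c" using cap nL Gc by (auto simp: L0_def)
          then consider "l1 \<le> c" | "Suc c < l1" by linarith
          then show ?thesis
          proof cases
            case 1
            then have "l1 < Suc m" using c by auto
            then show ?thesis using cap 1 G[of l1] B[of l1] by (simp add: adjG_iff f_def)
          next
            case 2
            then have "l1 - 1 < Suc m" "\<not> l1 \<le> c" using cap by auto
            then show ?thesis using cap 2 G[of l1] B[of l1] by (simp add: adjG_iff f_def)
          qed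
        next
          case cup
          have "l1 \<noteq> Suc c" using cup nL Gc by (auto simp: L0_def)
          then consider "l1 \<le> c" | "Suc c < l1" by linarith
          then show ?thesis
          proof cases
            case 1
            then have "l1 \<le> Suc m" "l1 - 1 \<le> c" using c cup by auto
            then show ?thesis using cup 1 G[of "l1 - 1"] B[of "l1 - 1"] by (simp add: adjG_iff f_def)
          next
            case 2
            then have "l1 - 1 \<le> Suc m" "\<not> l1 \<le> c" "\<not> l1 - 1 \<le> c" "0 < l1 - 1" using cup by auto
            then show ?thesis using cup 2 G[of "l1 - 1"] B[of "l1 - 1"] by (simp add: adjG_iff f_def)
          qed
        next
          case cl then show ?thesis using c by (simp add: adjG_iff f_def)
        qed
      qed
      then show ?thesis using xy by (auto simp: symc_def)
    qed
    show "\<exists>x\<in>V - L0. \<exists>y\<in>V - L0. f x = x' \<and> f y = y' \<and> (symc R)\<^sup>*\<^sup>* x y"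
      if "x' \<in> Vs n (Suc m)" "y' \<in> Vs n (Suc m)" "adjG n (Suc m) G2 B2 x' y'" for x' y'
    proof -
      obtain l1 p1 l2 p2 where xy: "x' = (l1,p1)" "y' = (l2,p2)" by fastforce
      have e: "adjG n (Suc m) G2 B2 (l1,p1) (l2,p2)" using that xy by simp
      have "\<exists>a b. R a b \<and> f a = (l1,p1) \<and> f b = (l2,p2) \<and> a \<notin> L0 \<and> b \<notin> L0"
      proof -
        consider (v) "l1 < Suc m \<and> l2 = Suc l1 \<and> p2 = p1 \<and> 1 \<le> p1 \<and> p1 \<le> n \<and> (\<not> B2 l1 \<or> (p1 \<noteq> G2 l1 \<and> p1 \<noteq> Suc (G2 l1)))"
          | (cap) "l2 = l1 \<and> l1 < Suc m \<and> B2 l1 \<and> p1 = G2 l1 \<and> p2 = Suc (G2 l1)"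
          | (cup) "l2 = l1 \<and> 0 < l1 \<and> l1 \<le> Suc m \<and> B2 (l1 - 1) \<and> p1 = G2 (l1 - 1) \<and> p2 = Suc (G2 (l1 - 1))"
          | (cl) "l1 = Suc m \<and> l2 = 0 \<and> p2 = p1 \<and> 1 \<le> p1 \<and> p1 \<le> n"
          using e unfolding adjG_iff by blast
        then show ?thesis
        proof cases
          case v then show ?thesis
          proof (cases "l1 < c")
            case True
            then show ?thesis using v c
              by (intro exI[of _ "(l1,p1)"] exI[of _ "(l2,p2)"]) (simp add: R_def adjG_iff G B f_def L0_def)
          next
            case False
            then have "l1 = c \<longrightarrow> p1 \<noteq> g \<and> p1 \<noteq> Suc g" using v Bc g_def by auto
            then show ?thesis using v c False
              by (intro exI[of _ "(Suc l1,p1)"] exI[of _ "(Suc l2,p2)"]) (simp add: R_def adjG_iff G B f_def L0_def)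
          qed
        next
          case cap then show ?thesis
          proof (cases "l1 \<le> c")
            case True
            then show ?thesis using cap c
              by (intro exI[of _ "(l1,p1)"] exI[of _ "(l2,p2)"]) (simp add: R_def adjG_iff G B f_def L0_def)
          next
            case False
            then show ?thesis using cap c
              by (intro exI[of _ "(Suc l1,p1)"] exI[of _ "(Suc l2,p2)"]) (simp add: R_def adjG_iff G B f_def L0_def)
          qed
        next
          case cup then show ?thesis
          proof (cases "l1 \<le> c")
            case True
            then have "l1 - 1 \<le> c" by simp
            then show ?thesis using cup c True
              by (intro exI[of _ "(l1,p1)"] exI[of _ "(l2,p2)"]) (simp add: R_def adjG_iff G B f_def L0_def)
          next
            case False
            then show ?thesis using cup c
              by (intro exI[of _ "(Suc l1,p1)"] exI[of _ "(Suc l2,p2)"]) (simp add: R_def adjG_iff G B f_def L0_def)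
          qed
        next
          case cl then show ?thesis using c
            by (intro exI[of _ "(Suc (Suc m),p1)"] exI[of _ "(0,p2)"]) (simp add: R_def adjG_iff G B f_def L0_def)
        qed
      qed
      then obtain a b where ab: "R a b" "f a = (l1,p1)" "f b = (l2,p2)" "a \<notin> L0" "b \<notin> L0" by blast
      have "a \<in> V" "b \<in> V" using adjG_in_V[of "Suc (Suc m)" G n B a b, OF bd] ab(1) by (auto simp: R_def V_def)
      moreover have "(symc R)\<^sup>*\<^sup>* a b" using ab(1) by (auto simp: symc_def intro: r_into_rtranclp)
      ultimately show ?thesis using ab xy by blast
    qed
    show "(symc R)\<^sup>*\<^sup>* x y"
      if "x \<in> V - L0" "y \<in> V - L0" "f x = f y" for x y
    proof -
      obtain l1 p1 l2 p2 where xy: "x = (l1,p1)" "y = (l2,p2)" by fastforce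
      have p: "p1 = p2" "1 \<le> p1" "p1 \<le> n" using that xy by (auto simp: f_def Vs_def V_def split: if_splits)
      have lv: "l1 = l2 \<or> (l1 = c \<and> l2 = Suc c) \<or> (l2 = c \<and> l1 = Suc c)"
        using that xy by (auto simp: f_def split: if_splits)
      show ?thesis
      proof (cases "l1 = l2")
        case True then show ?thesis using xy p by simp
      next
        case False
        then have "(Suc c, p1) \<notin> L0" using lv that xy p by auto
        then have "p1 \<noteq> g \<and> p1 \<noteq> Suc g" by (simp add: L0_def)
        then have ed: "R (c,p1) (Suc c, p1)" using p c Gc by (simp add: adjG_iff R_def)
        show ?thesis using False lv ed xy p by (auto simp: symc_def intro: r_into_rtranclp)
      qed
    qed
  qed
  then show ?thesis using split unfolding R_def V_def by simp
qed



lemma num_loops_adjG: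
  "num_loops n w st = card (comps (adjG n (length w) (\<lambda>c. braid_gen (w ! c)) (\<lambda>c. st ! c)) (Vs n (length w)))"
  unfolding num_loops_def comps_def res_vertices_def Vs_def symc_def res_adj_adjG[symmetric] ..

lemma loops_F:
  assumes "length sa = length \<alpha>" "length sg = length \<gamma>"
    and "\<forall>y\<in>set \<alpha> \<union> set \<gamma> \<union> {x}. 1 \<le> braid_gen y \<and> braid_gen y < n"
  shows "num_loops n (\<alpha> @ [x] @ \<gamma>) (sa @ [False] @ sg) = num_loops n (\<alpha> @ \<gamma>) (sa @ sg)"
proof -
  define m where "m = length \<alpha> + length \<gamma>"
  have l1: "length (\<alpha> @ [x] @ \<gamma>) = Suc m" and l2: "length (\<alpha> @ \<gamma>) = m" by (simp_all add: m_def)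
  show ?thesis unfolding num_loops_adjG l1 l2
  proof (rule del_F[where c = "length \<alpha>" and gx = "braid_gen x"])
    show "length \<alpha> \<le> m" by (simp add: m_def)
    show "braid_gen ((\<alpha> @ [x] @ \<gamma>) ! i) = (if i < length \<alpha> then braid_gen ((\<alpha> @ \<gamma>) ! i)
        else if i = length \<alpha> then braid_gen x else braid_gen ((\<alpha> @ \<gamma>) ! (i - 1)))" for i
      by (cases "i < length \<alpha>"; cases "i = length \<alpha>") (auto simp: nth_append nth_Cons')
    show "(sa @ [False] @ sg) ! i = (if i < length \<alpha> then (sa @ sg) ! i
        else if i = length \<alpha> then False else (sa @ sg) ! (i - 1))" for i
      using assms(1) by (cases "i < length \<alpha>"; cases "i = length \<alpha>") (auto simp: nth_append nth_Cons')
    show "1 \<le> braid_gen ((\<alpha> @ [x] @ \<gamma>) ! i) \<and> braid_gen ((\<alpha> @ [x] @ \<gamma>) ! i) < n" if "i < Suc m" for i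
    proof -
      have "(\<alpha> @ [x] @ \<gamma>) ! i \<in> set (\<alpha> @ [x] @ \<gamma>)" using that l1 by (metis nth_mem)
      then show ?thesis using assms(3) by auto
    qed
  qed
qed

lemma loops_TT:
  assumes "length sa = length \<alpha>" "length sg = length \<gamma>"
    and "\<forall>y\<in>set \<alpha> \<union> set \<gamma> \<union> {x}. 1 \<le> braid_gen y \<and> braid_gen y < n"
  shows "num_loops n (\<alpha> @ [x, x] @ \<gamma>) (sa @ [True, True] @ sg) = num_loops n (\<alpha> @ [x] @ \<gamma>) (sa @ [True] @ sg) + 1"
proof -
  define m where "m = length \<alpha> + length \<gamma>"
  have l1: "length (\<alpha> @ [x, x] @ \<gamma>) = Suc (Suc m)" and l2: "length (\<alpha> @ [x] @ \<gamma>) = Suc m"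
    by (simp_all add: m_def)
  show ?thesis unfolding num_loops_adjG l1 l2
  proof (rule del_TT[where c = "length \<alpha>"])
    show "length \<alpha> \<le> m" by (simp add: m_def)
    show "braid_gen ((\<alpha> @ [x, x] @ \<gamma>) ! i) = (if i \<le> length \<alpha> then braid_gen ((\<alpha> @ [x] @ \<gamma>) ! i)
        else braid_gen ((\<alpha> @ [x] @ \<gamma>) ! (i - 1)))" for i
    proof -
      consider "i < length \<alpha>" | "i = length \<alpha>" | "i = Suc (length \<alpha>)" | "Suc (length \<alpha>) < i" by linarith
      then show ?thesis by cases (auto simp: nth_append nth_Cons')
    qed
    show "(sa @ [True, True] @ sg) ! i = (if i \<le> length \<alpha> then (sa @ [True] @ sg) ! i
        else (sa @ [True] @ sg) ! (i - 1))" for i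
    proof -
      consider "i < length \<alpha>" | "i = length \<alpha>" | "i = Suc (length \<alpha>)" | "Suc (length \<alpha>) < i" by linarith
      then show ?thesis using assms(1) by cases (auto simp: nth_append nth_Cons')
    qed
    show "(sa @ [True] @ sg) ! length \<alpha>" using assms(1) by (simp add: nth_append)
    show "1 \<le> braid_gen ((\<alpha> @ [x, x] @ \<gamma>) ! i) \<and> braid_gen ((\<alpha> @ [x, x] @ \<gamma>) ! i) < n" if "i < Suc (Suc m)" for i
    proof -
      have "(\<alpha> @ [x, x] @ \<gamma>) ! i \<in> set (\<alpha> @ [x, x] @ \<gamma>)" using that l1 by (metis nth_mem)
      then show ?thesis using assms(3) by auto
    qed
  qed
qed



definition SL :: "nat \<Rightarrow> bool list set" where "SL m = {st. length st = m}"

lemma finite_SL: "finite (SL m)"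
  using finite_lists_length_eq[of "UNIV :: bool set" m] by (simp add: SL_def)

lemma sum_SL_append:
  "(\<Sum>st\<in>SL (a + b). f st) = (\<Sum>x\<in>SL a. \<Sum>y\<in>SL b. f (x @ y))"
proof -
  have img: "SL (a + b) = (\<lambda>(x,y). x @ y) ` (SL a \<times> SL b)"
  proof
    show "SL (a + b) \<subseteq> (\<lambda>(x,y). x @ y) ` (SL a \<times> SL b)"
    proof
      fix st assume "st \<in> SL (a + b)"
      then have "st = take a st @ drop a st" "take a st \<in> SL a" "drop a st \<in> SL b"
        by (auto simp: SL_def)
      then show "st \<in> (\<lambda>(x,y). x @ y) ` (SL a \<times> SL b)" by (metis (no_types, lifting) SigmaI case_prod_conv image_eqI)
    qed
    show "(\<lambda>(x,y). x @ y) ` (SL a \<times> SL b) \<subseteq> SL (a + b)" by (auto simp: SL_def)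
  qed
  have inj: "inj_on (\<lambda>(x,y). x @ y) (SL a \<times> SL b)"
  proof (rule inj_onI)
    fix p q assume "p \<in> SL a \<times> SL b" "q \<in> SL a \<times> SL b" "(\<lambda>(x,y). x @ y) p = (\<lambda>(x,y). x @ y) q"
    moreover obtain x y x' y' where "p = (x,y)" "q = (x',y')" by fastforce
    ultimately have "length x = length x'" "x @ y = x' @ y'" by (auto simp: SL_def)
    then show "p = q" using \<open>p = (x,y)\<close> \<open>q = (x',y')\<close> by (simp add: append_eq_append_conv)
  qed
  have "(\<Sum>st\<in>SL (a + b). f st) = (\<Sum>p\<in>SL a \<times> SL b. f (case p of (x,y) \<Rightarrow> x @ y))"
    unfolding img by (subst sum.reindex[OF inj]) (simp add: comp_def)
  also have "\<dots> = (\<Sum>x\<in>SL a. \<Sum>y\<in>SL b. f (x @ y))"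
    by (subst sum.cartesian_product) (simp add: case_prod_beta)
  finally show ?thesis .
qed

lemma SL2: "SL 2 = {[False,False],[False,True],[True,False],[True,True]}"
proof
  show "SL 2 \<subseteq> {[False,False],[False,True],[True,False],[True,True]}"
  proof
    fix st assume "st \<in> SL 2"
    then obtain a b where "st = [a,b]" by (auto simp: SL_def numeral_2_eq_2 length_Suc_conv)
    then show "st \<in> {[False,False],[False,True],[True,False],[True,True]}" by (cases a; cases b) auto
  qed
  show "{[False,False],[False,True],[True,False],[True,True]} \<subseteq> SL 2" by (auto simp: SL_def)
qed

lemma SL1: "SL 1 = {[False],[True]}"
proof
  show "SL 1 \<subseteq> {[False],[True]}"
  proof
    fix st assume "st \<in> SL 1"
    then obtain a where "st = [a]" by (auto simp: SL_def length_Suc_conv)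
    then show "st \<in> {[False],[True]}" by (cases a) auto
  qed
  show "{[False],[True]} \<subseteq> SL 1" by (auto simp: SL_def)
qed

definition wtl :: "int list \<Rightarrow> bool list \<Rightarrow> int fls" where
  "wtl w st = prod_list (map2 smooth_wt w st)"

lemma prod_wtl: "length st = length w \<Longrightarrow> (\<Prod>c<length w. smooth_wt (w ! c) (st ! c)) = wtl w st"
proof (induction w arbitrary: st)
  case Nil then show ?case by (simp add: wtl_def)
next
  case (Cons x w)
  then obtain b st' where st: "st = b # st'" "length st' = length w" by (cases st) auto
  have "(\<Prod>c<length (x # w). smooth_wt ((x # w) ! c) (st ! c)) =
        smooth_wt x b * (\<Prod>c<length w. smooth_wt (w ! c) (st' ! c))"
    unfolding st by (simp only: length_Cons prod.lessThan_Suc_shift) simp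
  then show ?case using Cons.IH[OF st(2)] st by (simp add: wtl_def)
qed

lemma wtl_app: "length sa = length a \<Longrightarrow> wtl (a @ b) (sa @ sb) = wtl a sa * wtl b sb"
  by (simp add: wtl_def zip_append)

lemma wtl_Cons: "wtl (x # a) (s # sa) = smooth_wt x s * wtl a sa"
  by (simp add: wtl_def)

lemma wtl_Nil: "wtl [] [] = 1" by (simp add: wtl_def)

lemma jones_SL: "jones_braid n w = (\<Sum>st\<in>SL (length w). wtl w st * loop_val ^ (num_loops n w st - 1))"
  unfolding jones_braid_def SL_def by (rule sum.cong) (auto simp: prod_wtl)

lemma num_loops_pos:
  assumes "1 \<le> n" shows "1 \<le> num_loops n w st"
proof -
  have "(0, 1) \<in> Vs n (length w)" using assms by (simp add: Vs_def)
  then have "comps (adjG n (length w) (\<lambda>c. braid_gen (w ! c)) (\<lambda>c. st ! c)) (Vs n (length w)) \<noteq> {}"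
    unfolding comps_image by blast
  moreover have "finite (comps (adjG n (length w) (\<lambda>c. braid_gen (w ! c)) (\<lambda>c. st ! c)) (Vs n (length w)))"
    unfolding comps_image by (simp add: finite_Vs)
  ultimately show ?thesis unfolding num_loops_adjG by (simp add: Suc_le_eq card_gt_0_iff)
qed

lemma alg:
  fixes s si X Y Wa Wc :: "'a::comm_ring_1"
  assumes "s * si = 1"
  shows "Wa * ((-s) * ((-s) * Wc)) * X + Wa * ((-s) * ((-(s^2)) * Wc)) * Y
       + Wa * ((-(s^2)) * ((-s) * Wc)) * Y + Wa * ((-(s^2)) * ((-(s^2)) * Wc)) * ((-s - si) * Y)
     = (s^3 - s) * (Wa * ((-s) * Wc) * X + Wa * ((-(s^2)) * Wc) * Y) + s^4 * (Wa * Wc * X)"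
proof -
  have "s^4 * si = s^3 * (s * si)" by (simp add: power_numeral_reduce mult_ac)
  then have h: "s^4 * si = s^3" using assms by simp
  have "Wa * ((-(s^2)) * ((-(s^2)) * Wc)) * ((-s - si) * Y) = - Wa * Wc * Y * s^5 - Wa * Wc * Y * (s^4 * si)"
    by (simp add: algebra_simps power_numeral_reduce)
  also have "\<dots> = - Wa * Wc * Y * s^5 - Wa * Wc * Y * s^3" by (simp add: h)
  finally have e: "Wa * ((-(s^2)) * ((-(s^2)) * Wc)) * ((-s - si) * Y) = - Wa * Wc * Y * s^5 - Wa * Wc * Y * s^3" .
  show ?thesis unfolding e by (simp add: algebra_simps power_numeral_reduce)
qed



lemma jones_rec:
  assumes bd: "\<forall>y\<in>set \<alpha> \<union> set \<gamma> \<union> {g}. 1 \<le> braid_gen y \<and> braid_gen y < n" and gp: "0 < g"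
  shows "jones_braid n (\<alpha> @ [g, g] @ \<gamma>) =
           (jS^3 - jS) * jones_braid n (\<alpha> @ [g] @ \<gamma>) + jS^4 * jones_braid n (\<alpha> @ \<gamma>)"
proof -
  define t where "t w st = wtl w st * loop_val ^ (num_loops n w st - 1)" for w st
  define A where "A = length \<alpha>"
  define C where "C = length \<gamma>"
  have J2: "jones_braid n (\<alpha> @ [g, g] @ \<gamma>) = (\<Sum>sa\<in>SL A. \<Sum>sg\<in>SL C.
      t (\<alpha> @ [g, g] @ \<gamma>) (sa @ [False, False] @ sg) + t (\<alpha> @ [g, g] @ \<gamma>) (sa @ [False, True] @ sg)
    + t (\<alpha> @ [g, g] @ \<gamma>) (sa @ [True, False] @ sg) + t (\<alpha> @ [g, g] @ \<gamma>) (sa @ [True, True] @ sg))"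
  proof -
    have l: "length (\<alpha> @ [g, g] @ \<gamma>) = (A + 2) + C" by (simp add: A_def C_def)
    have "jones_braid n (\<alpha> @ [g, g] @ \<gamma>) = (\<Sum>x\<in>SL (A + 2). \<Sum>sg\<in>SL C. t (\<alpha> @ [g, g] @ \<gamma>) (x @ sg))"
      unfolding jones_SL l sum_SL_append t_def ..
    also have "\<dots> = (\<Sum>sa\<in>SL A. \<Sum>u\<in>SL 2. \<Sum>sg\<in>SL C. t (\<alpha> @ [g, g] @ \<gamma>) ((sa @ u) @ sg))"
      unfolding sum_SL_append ..
    also have "\<dots> = (\<Sum>sa\<in>SL A. \<Sum>sg\<in>SL C.
      t (\<alpha> @ [g, g] @ \<gamma>) (sa @ [False, False] @ sg) + t (\<alpha> @ [g, g] @ \<gamma>) (sa @ [False, True] @ sg)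
    + t (\<alpha> @ [g, g] @ \<gamma>) (sa @ [True, False] @ sg) + t (\<alpha> @ [g, g] @ \<gamma>) (sa @ [True, True] @ sg))"
      by (simp add: SL2 sum.distrib)
    finally show ?thesis .
  qed
  have J1: "jones_braid n (\<alpha> @ [g] @ \<gamma>) = (\<Sum>sa\<in>SL A. \<Sum>sg\<in>SL C.
      t (\<alpha> @ [g] @ \<gamma>) (sa @ [False] @ sg) + t (\<alpha> @ [g] @ \<gamma>) (sa @ [True] @ sg))"
  proof -
    have l: "length (\<alpha> @ [g] @ \<gamma>) = (A + 1) + C" by (simp add: A_def C_def)
    have "jones_braid n (\<alpha> @ [g] @ \<gamma>) = (\<Sum>x\<in>SL (A + 1). \<Sum>sg\<in>SL C. t (\<alpha> @ [g] @ \<gamma>) (x @ sg))"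
      unfolding jones_SL l sum_SL_append t_def ..
    also have "\<dots> = (\<Sum>sa\<in>SL A. \<Sum>u\<in>SL 1. \<Sum>sg\<in>SL C. t (\<alpha> @ [g] @ \<gamma>) ((sa @ u) @ sg))"
      unfolding sum_SL_append ..
    also have "\<dots> = (\<Sum>sa\<in>SL A. \<Sum>sg\<in>SL C.
      t (\<alpha> @ [g] @ \<gamma>) (sa @ [False] @ sg) + t (\<alpha> @ [g] @ \<gamma>) (sa @ [True] @ sg))"
      using SL1 by (simp add: sum.distrib)
    finally show ?thesis .
  qed
  have J0: "jones_braid n (\<alpha> @ \<gamma>) = (\<Sum>sa\<in>SL A. \<Sum>sg\<in>SL C. t (\<alpha> @ \<gamma>) (sa @ sg))"
  proof -
    have l: "length (\<alpha> @ \<gamma>) = A + C" by (simp add: A_def C_def)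
    show ?thesis unfolding jones_SL l sum_SL_append t_def ..
  qed
  have n1: "1 \<le> n" using bd by auto
  have pw: "t (\<alpha> @ [g, g] @ \<gamma>) (sa @ [False, False] @ sg) + t (\<alpha> @ [g, g] @ \<gamma>) (sa @ [False, True] @ sg)
    + t (\<alpha> @ [g, g] @ \<gamma>) (sa @ [True, False] @ sg) + t (\<alpha> @ [g, g] @ \<gamma>) (sa @ [True, True] @ sg)
    = (jS^3 - jS) * (t (\<alpha> @ [g] @ \<gamma>) (sa @ [False] @ sg) + t (\<alpha> @ [g] @ \<gamma>) (sa @ [True] @ sg))
      + jS^4 * t (\<alpha> @ \<gamma>) (sa @ sg)"
    if sa: "sa \<in> SL A" and sg: "sg \<in> SL C" for sa sg
  proof -
    have la: "length sa = length \<alpha>" and lg: "length sg = length \<gamma>"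
      using sa sg by (auto simp: SL_def A_def C_def)
    have bd': "\<forall>y\<in>set \<alpha> \<union> set ([g] @ \<gamma>) \<union> {g}. 1 \<le> braid_gen y \<and> braid_gen y < n"
      "\<forall>y\<in>set (\<alpha> @ [g]) \<union> set \<gamma> \<union> {g}. 1 \<le> braid_gen y \<and> braid_gen y < n"
      using bd by auto
    define N0 where "N0 = num_loops n (\<alpha> @ \<gamma>) (sa @ sg)"
    define N1 where "N1 = num_loops n (\<alpha> @ [g] @ \<gamma>) (sa @ [True] @ sg)"
    have n1F: "num_loops n (\<alpha> @ [g] @ \<gamma>) (sa @ [False] @ sg) = N0"
      unfolding N0_def by (rule loops_F[OF la lg bd])
    have nFF: "num_loops n (\<alpha> @ [g, g] @ \<gamma>) (sa @ [False, False] @ sg) = N0"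
      using loops_F[of sa \<alpha> "[False] @ sg" "[g] @ \<gamma>" g n] la lg bd'(1) n1F by simp
    have nFT: "num_loops n (\<alpha> @ [g, g] @ \<gamma>) (sa @ [False, True] @ sg) = N1"
      using loops_F[of sa \<alpha> "[True] @ sg" "[g] @ \<gamma>" g n] la lg bd'(1) unfolding N1_def by simp
    have nTF: "num_loops n (\<alpha> @ [g, g] @ \<gamma>) (sa @ [True, False] @ sg) = N1"
      using loops_F[of "sa @ [True]" "\<alpha> @ [g]" sg \<gamma> g n] la lg bd'(2) unfolding N1_def by simp
    have nTT: "num_loops n (\<alpha> @ [g, g] @ \<gamma>) (sa @ [True, True] @ sg) = N1 + 1"
      using loops_TT[OF la lg bd] unfolding N1_def by simp
    have N1p: "N1 = Suc (N1 - 1)" using num_loops_pos[OF n1] unfolding N1_def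
      by (metis One_nat_def Suc_pred' less_eq_Suc_le)
    have w2: "wtl (\<alpha> @ [g, g] @ \<gamma>) (sa @ [b1, b2] @ sg) = wtl \<alpha> sa * (smooth_wt g b1 * (smooth_wt g b2 * wtl \<gamma> sg))"
      for b1 b2 using la by (simp add: wtl_app wtl_Cons)
    have w1: "wtl (\<alpha> @ [g] @ \<gamma>) (sa @ [b1] @ sg) = wtl \<alpha> sa * (smooth_wt g b1 * wtl \<gamma> sg)"
      for b1 using la by (simp add: wtl_app wtl_Cons)
    have w0: "wtl (\<alpha> @ \<gamma>) (sa @ sg) = wtl \<alpha> sa * wtl \<gamma> sg" using la by (simp add: wtl_app)
    have sw: "smooth_wt g False = - jS" "smooth_wt g True = - (jS ^ 2)" using gp by (simp_all add: smooth_wt_def)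
    have dY: "loop_val ^ (N1 + 1 - 1) = (- jS - jSinv) * loop_val ^ (N1 - 1)"
      by (subst N1p) (simp add: loop_val_def)
    have inv: "jS * jSinv = (1 :: int fls)"
      by (simp add: fls_X_inv_times_conv_shift fls_X_conv_shift_1)
    show ?thesis
      unfolding t_def nFF nFT nTF nTT n1F w2 w1 w0 sw dY N1_def[symmetric] N0_def[symmetric]
      by (rule alg[OF inv])
  qed
  have "jones_braid n (\<alpha> @ [g, g] @ \<gamma>) = (\<Sum>sa\<in>SL A. \<Sum>sg\<in>SL C.
      (jS^3 - jS) * (t (\<alpha> @ [g] @ \<gamma>) (sa @ [False] @ sg) + t (\<alpha> @ [g] @ \<gamma>) (sa @ [True] @ sg))
      + jS^4 * t (\<alpha> @ \<gamma>) (sa @ sg))"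
    unfolding J2 by (intro sum.cong refl pw)
  also have "\<dots> = (jS^3 - jS) * (\<Sum>sa\<in>SL A. \<Sum>sg\<in>SL C.
        t (\<alpha> @ [g] @ \<gamma>) (sa @ [False] @ sg) + t (\<alpha> @ [g] @ \<gamma>) (sa @ [True] @ sg))
      + jS^4 * (\<Sum>sa\<in>SL A. \<Sum>sg\<in>SL C. t (\<alpha> @ \<gamma>) (sa @ sg))"
    by (simp add: sum.distrib sum_distrib_left distrib_left)
  finally show ?thesis unfolding J1 J0 .
qed



definition Bs :: "nat list \<Rightarrow> nat list set" where
  "Bs a = {b. length b = length a \<and> list_all2 (\<le>) b a}"

lemma Bs_Nil: "Bs [] = {[]}" by (auto simp: Bs_def)

lemma Bs_Cons: "Bs (x # a) = (\<lambda>(y,b). y # b) ` ({0..x} \<times> Bs a)"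
proof
  show "Bs (x # a) \<subseteq> (\<lambda>(y,b). y # b) ` ({0..x} \<times> Bs a)"
  proof
    fix c assume "c \<in> Bs (x # a)"
    then obtain y b where "c = y # b" "y \<le> x" "b \<in> Bs a"
      by (cases c) (auto simp: Bs_def)
    then show "c \<in> (\<lambda>(y,b). y # b) ` ({0..x} \<times> Bs a)" by force
  qed
  show "(\<lambda>(y,b). y # b) ` ({0..x} \<times> Bs a) \<subseteq> Bs (x # a)" by (auto simp: Bs_def)
qed

lemma finite_Bs: "finite (Bs a)"
  by (induction a) (auto simp: Bs_Nil Bs_Cons)

definition Js :: "nat \<Rightarrow> nat list set" where
  "Js m = {J :: nat list. length J = m \<and> set J \<subseteq> {0, 1}}"

lemma Js_0: "Js 0 = {[]}" by (auto simp: Js_def)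

lemma Js_Suc: "Js (Suc m) = (\<lambda>(y,b). y # b) ` ({0,1} \<times> Js m)"
proof
  show "Js (Suc m) \<subseteq> (\<lambda>(y,b). y # b) ` ({0,1} \<times> Js m)"
  proof
    fix c assume "c \<in> Js (Suc m)"
    then obtain y b where "c = y # b" "y \<in> {0,1}" "b \<in> Js m"
      by (cases c) (auto simp: Js_def)
    then show "c \<in> (\<lambda>(y,b). y # b) ` ({0,1} \<times> Js m)" by force
  qed
  show "(\<lambda>(y,b). y # b) ` ({0,1} \<times> Js m) \<subseteq> Js (Suc m)" by (auto simp: Js_def)
qed

lemma finite_Js: "finite (Js m)"
  by (induction m) (auto simp: Js_0 Js_Suc)

lemma sum_cons_image:
  "(\<Sum>c\<in>(\<lambda>(y,b). y # b) ` (A \<times> B). f c) = (\<Sum>y\<in>A. \<Sum>b\<in>B. f (y # b))"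
proof -
  have inj: "inj_on (\<lambda>(y,b). y # b) (A \<times> B)" by (rule inj_onI) auto
  have "(\<Sum>c\<in>(\<lambda>(y,b). y # b) ` (A \<times> B). f c) = (\<Sum>p\<in>A \<times> B. f ((\<lambda>(y,b). y # b) p))"
    by (simp only: sum.reindex[OF inj] comp_def)
  also have "\<dots> = (\<Sum>y\<in>A. \<Sum>b\<in>B. f (y # b))"
    unfolding sum.cartesian_product by (rule sum.cong) auto
  finally show ?thesis .
qed

lemma q_poly_eq: "q_poly = [:1, jS - jS^3, - (jS^4):]"
  by (simp add: q_poly_def algebra_simps power_numeral_reduce)

lemma oneD:
  fixes G :: "nat \<Rightarrow> int fls"
  assumes rec: "\<And>e. G (e + 2) = (jS^3 - jS) * G (e + 1) + jS^4 * G e"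
  shows "(\<Sum>y\<in>{0..x}. coeff q_poly y * G (x - y)) = (\<Sum>z\<in>{0,1}. coeff (Q_poly z) x * G z)"
proof (cases x)
  case 0 then show ?thesis by (simp add: q_poly_eq Q_poly_def)
next
  case (Suc x')
  show ?thesis
  proof (cases x')
    case 0
    have "{0..Suc 0} = {0, Suc 0}" by auto
    then show ?thesis using Suc 0 by (simp add: q_poly_eq Q_poly_def algebra_simps)
  next
    case (Suc e)
    have x: "x = e + 2" using Suc \<open>x = Suc x'\<close> by simp
    have "(\<Sum>y\<in>{0..x}. coeff q_poly y * G (x - y)) = (\<Sum>y\<in>{0,1,2}. coeff q_poly y * G (x - y))"
    proof (rule sum.mono_neutral_right)
      show "finite {0..x}" by simp
      show "{0,1,2} \<subseteq> {0..x}" using x by auto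
      show "\<forall>i\<in>{0..x} - {0,1,2}. coeff q_poly i * G (x - i) = 0"
      proof
        fix i assume "i \<in> {0..x} - {0,1,2}"
        then have "3 \<le> i" by auto
        then have "i = Suc (Suc (Suc (i - 3)))" by simp
        then obtain j where "i = Suc (Suc (Suc j))" by blast
        then show "coeff q_poly i * G (x - i) = 0" by (simp add: q_poly_eq)
      qed
    qed
    also have "\<dots> = G (e + 2) + (jS - jS^3) * G (e + 1) - jS^4 * G e"
      by (simp add: q_poly_eq x numeral_2_eq_2)
    also have "\<dots> = 0" unfolding rec by (simp add: algebra_simps)
    also have "0 = (\<Sum>z\<in>{0,1}. coeff (Q_poly z) x * G z)"
      by (simp add: Q_poly_def x)
    finally show ?thesis .
  qed
qed

lemma main_series:
  fixes F :: "nat list \<Rightarrow> int fls"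
  assumes rec: "\<And>l1 l2 e. length l1 + length l2 + 1 = length a \<Longrightarrow>
      F (l1 @ (e + 2) # l2) = (jS^3 - jS) * F (l1 @ (e + 1) # l2) + jS^4 * F (l1 @ e # l2)"
  shows "(\<Sum>b\<in>Bs a. prod_list (map (coeff q_poly) b) * F (map2 (-) a b)) =
         (\<Sum>J\<in>Js (length a). F J * prod_list (map2 (\<lambda>z x. coeff (Q_poly z) x) J a))"
  using rec
proof (induction a arbitrary: F)
  case Nil
  then show ?case by (simp add: Bs_Nil Js_0)
next
  case (Cons x a)
  define D where "D b = map2 (-) a b" for b
  have lD: "length (D b) = length a" if "b \<in> Bs a" for b using that by (simp add: D_def Bs_def)
  have "(\<Sum>b\<in>Bs (x # a). prod_list (map (coeff q_poly) b) * F (map2 (-) (x # a) b))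
      = (\<Sum>y\<in>{0..x}. \<Sum>b\<in>Bs a. coeff q_poly y * (prod_list (map (coeff q_poly) b) * F ((x - y) # D b)))"
    unfolding Bs_Cons sum_cons_image by (simp add: D_def mult_ac)
  also have "\<dots> = (\<Sum>b\<in>Bs a. prod_list (map (coeff q_poly) b) * (\<Sum>y\<in>{0..x}. coeff q_poly y * F ((x - y) # D b)))"
    by (subst sum.swap) (simp add: sum_distrib_left mult_ac)
  also have "\<dots> = (\<Sum>b\<in>Bs a. prod_list (map (coeff q_poly) b) * (\<Sum>z\<in>{0,1}. coeff (Q_poly z) x * F (z # D b)))"
  proof (rule sum.cong[OF refl])
    fix b assume b: "b \<in> Bs a"
    have "(\<Sum>y\<in>{0..x}. coeff q_poly y * F ((x - y) # D b)) = (\<Sum>z\<in>{0,1}. coeff (Q_poly z) x * F (z # D b))"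
    proof (rule oneD[where G = "\<lambda>e. F (e # D b)"])
      fix e
      show "F ((e + 2) # D b) = (jS^3 - jS) * F ((e + 1) # D b) + jS^4 * F (e # D b)"
        using Cons.prems[of "[]" "D b" e] lD[OF b] by simp
    qed
    then show "prod_list (map (coeff q_poly) b) * (\<Sum>y\<in>{0..x}. coeff q_poly y * F ((x - y) # D b)) =
               prod_list (map (coeff q_poly) b) * (\<Sum>z\<in>{0,1}. coeff (Q_poly z) x * F (z # D b))" by simp
  qed
  also have "\<dots> = (\<Sum>z\<in>{0,1}. coeff (Q_poly z) x * (\<Sum>b\<in>Bs a. prod_list (map (coeff q_poly) b) * F (z # D b)))"
    unfolding sum_distrib_left by (subst sum.swap) (simp add: mult_ac)
  also have "\<dots> = (\<Sum>z\<in>{0,1}. coeff (Q_poly z) x *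
        (\<Sum>J\<in>Js (length a). F (z # J) * prod_list (map2 (\<lambda>z x. coeff (Q_poly z) x) J a)))"
  proof (rule sum.cong[OF refl])
    fix z :: nat
    have "(\<Sum>b\<in>Bs a. prod_list (map (coeff q_poly) b) * F (z # D b)) =
          (\<Sum>J\<in>Js (length a). F (z # J) * prod_list (map2 (\<lambda>z x. coeff (Q_poly z) x) J a))"
      unfolding D_def
    proof (rule Cons.IH[where F = "\<lambda>l. F (z # l)"])
      fix l1 l2 :: "nat list" and e :: nat
      assume "length l1 + length l2 + 1 = length a"
      then show "F (z # l1 @ (e + 2) # l2) = (jS^3 - jS) * F (z # l1 @ (e + 1) # l2) + jS^4 * F (z # l1 @ e # l2)"
        using Cons.prems[of "z # l1" l2 e] by simp
    qed
    then show "coeff (Q_poly z) x * (\<Sum>b\<in>Bs a. prod_list (map (coeff q_poly) b) * F (z # D b)) =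
       coeff (Q_poly z) x * (\<Sum>J\<in>Js (length a). F (z # J) * prod_list (map2 (\<lambda>z x. coeff (Q_poly z) x) J a))"
      by simp
  qed
  also have "\<dots> = (\<Sum>J\<in>Js (length (x # a)). F J * prod_list (map2 (\<lambda>z x. coeff (Q_poly z) x) J (x # a)))"
    unfolding length_Cons Js_Suc sum_cons_image by (simp add: sum_distrib_left mult_ac)
  finally show ?case .
qed



lemma prod_list_nth: "prod_list xs = (\<Prod>i<length xs. xs ! i)"
proof (induction xs)
  case Nil then show ?case by simp
next
  case (Cons x xs)
  have "(\<Prod>i<length (x # xs). (x # xs) ! i) = x * (\<Prod>i<length xs. xs ! i)"
    by (simp only: length_Cons prod.lessThan_Suc_shift) simp
  then show ?case using Cons by simp
qed

lemma mult_upoly: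
  assumes j: "j < k" and lb: "length b = k"
  shows "mps_mult k (mps_upoly k j p) H b = (\<Sum>x\<in>{0..b ! j}. coeff p x * H (b[j := b ! j - x]))"
proof -
  define Bk where "Bk = {c. length c = k \<and> (\<forall>i<k. c ! i \<le> b ! i)}"
  have BkBs: "Bk = Bs b" using lb by (auto simp: Bk_def Bs_def list_all2_conv_all_nth)
  define e where "e x = (replicate k (0::nat))[j := x]" for x
  have ej: "e x ! j = x" for x using j by (simp add: e_def)
  have eo: "i \<noteq> j \<Longrightarrow> i < k \<Longrightarrow> e x ! i = 0" for x i by (simp add: e_def)
  have le: "length (e x) = k" for x by (simp add: e_def)
  have "mps_mult k (mps_upoly k j p) H b =
      (\<Sum>c\<in>Bk. mps_upoly k j p c * H (map (\<lambda>i. b ! i - c ! i) [0..<k]))"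
    by (simp add: mps_mult_def Bk_def)
  also have "\<dots> = (\<Sum>c\<in>e ` {0..b ! j}. mps_upoly k j p c * H (map (\<lambda>i. b ! i - c ! i) [0..<k]))"
  proof (rule sum.mono_neutral_right)
    show "finite Bk" unfolding BkBs by (rule finite_Bs)
    show "e ` {0..b ! j} \<subseteq> Bk"
    proof
      fix c assume "c \<in> e ` {0..b ! j}"
      then obtain x where x: "c = e x" "x \<le> b ! j" by auto
      show "c \<in> Bk" unfolding Bk_def
      proof (intro CollectI conjI allI impI)
        show "length c = k" using x le by simp
        fix i assume "i < k"
        show "c ! i \<le> b ! i" using x ej eo \<open>i < k\<close> by (cases "i = j") auto
      qed
    qed
    show "\<forall>c\<in>Bk - e ` {0..b ! j}. mps_upoly k j p c * H (map (\<lambda>i. b ! i - c ! i) [0..<k]) = 0"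
    proof
      fix c assume c: "c \<in> Bk - e ` {0..b ! j}"
      have "\<not> (\<forall>l<k. l \<noteq> j \<longrightarrow> c ! l = 0)"
      proof
        assume h: "\<forall>l<k. l \<noteq> j \<longrightarrow> c ! l = 0"
        have lc: "length c = k" and cj: "c ! j \<le> b ! j" using c j by (auto simp: Bk_def)
        have "c = e (c ! j)"
          by (rule nth_equalityI) (use lc le h ej eo in \<open>auto simp: le\<close>, metis ej eo)
        then have "c \<in> e ` {0..b ! j}" using cj by (metis atLeastAtMost_iff image_eqI zero_le)
        then show False using c by simp
      qed
      then have "mps_upoly k j p c = 0" unfolding mps_upoly_def by (rule if_not_P)
      then show "mps_upoly k j p c * H (map (\<lambda>i. b ! i - c ! i) [0..<k]) = 0" by simp
    qed
  qed
  also have "\<dots> = (\<Sum>x\<in>{0..b ! j}. mps_upoly k j p (e x) * H (map (\<lambda>i. b ! i - e x ! i) [0..<k]))"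
  proof (rule sum.reindex_cong[where l = e])
    show "inj_on e {0..b ! j}" by (rule inj_onI) (metis ej)
  qed auto
  also have "\<dots> = (\<Sum>x\<in>{0..b ! j}. coeff p x * H (b[j := b ! j - x]))"
  proof (rule sum.cong[OF refl])
    fix x
    have "mps_upoly k j p (e x) = coeff p x" using eo ej by (simp add: mps_upoly_def)
    moreover have "map (\<lambda>i. b ! i - e x ! i) [0..<k] = b[j := b ! j - x]"
    proof (rule nth_equalityI)
      show "length (map (\<lambda>i. b ! i - e x ! i) [0..<k]) = length (b[j := b ! j - x])" by (simp add: lb)
      fix i assume "i < length (map (\<lambda>i. b ! i - e x ! i) [0..<k])"
      then have ik: "i < k" by simp
      show "map (\<lambda>i. b ! i - e x ! i) [0..<k] ! i = b[j := b ! j - x] ! i"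
        using ik j lb ej eo by (cases "i = j") auto
    qed
    ultimately show "mps_upoly k j p (e x) * H (map (\<lambda>i. b ! i - e x ! i) [0..<k]) =
         coeff p x * H (b[j := b ! j - x])" by simp
  qed
  finally show ?thesis .
qed

lemma foldr_upoly:
  assumes "distinct js" "\<forall>j\<in>set js. j < k"
  shows "length b = k \<Longrightarrow> foldr (mps_mult k) (map (\<lambda>j. mps_upoly k j (p j)) js) (mps_one k) b =
     (if \<forall>l<k. l \<notin> set js \<longrightarrow> b ! l = 0 then \<Prod>j\<in>set js. coeff (p j) (b ! j) else 0)"
  using assms
proof (induction js arbitrary: b)
  case Nil
  have "b = replicate k 0 \<longleftrightarrow> (\<forall>l<k. b ! l = 0)"
    using Nil.prems(1) by (auto simp: list_eq_iff_nth_eq)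
  then show ?case by (simp add: mps_one_def)
next
  case (Cons j js)
  have jk: "j < k" and jn: "j \<notin> set js" and djs: "distinct js" and ajs: "\<forall>j\<in>set js. j < k"
    using Cons.prems by auto
  define H where "H = foldr (mps_mult k) (map (\<lambda>j. mps_upoly k j (p j)) js) (mps_one k)"
  have IH: "H c = (if \<forall>l<k. l \<notin> set js \<longrightarrow> c ! l = 0 then \<Prod>j\<in>set js. coeff (p j) (c ! j) else 0)"
    if "length c = k" for c
    unfolding H_def by (rule Cons.IH[OF that djs ajs])
  have "foldr (mps_mult k) (map (\<lambda>j. mps_upoly k j (p j)) (j # js)) (mps_one k) b
      = mps_mult k (mps_upoly k j (p j)) H b" by (simp add: H_def)
  also have "\<dots> = (\<Sum>x\<in>{0..b ! j}. coeff (p j) x * H (b[j := b ! j - x]))"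
    by (rule mult_upoly[OF jk Cons.prems(1)])
  also have "\<dots> = (\<Sum>x\<in>{b ! j}. coeff (p j) x * H (b[j := b ! j - x]))"
  proof (rule sum.mono_neutral_right)
    show "\<forall>x\<in>{0..b ! j} - {b ! j}. coeff (p j) x * H (b[j := b ! j - x]) = 0"
    proof
      fix x assume "x \<in> {0..b ! j} - {b ! j}"
      then have "b[j := b ! j - x] ! j \<noteq> 0" using jk Cons.prems(1) by auto
      then have "H (b[j := b ! j - x]) = 0" using IH[of "b[j := b ! j - x]"] jk jn Cons.prems(1) by auto
      then show "coeff (p j) x * H (b[j := b ! j - x]) = 0" by simp
    qed
  qed auto
  also have "\<dots> = coeff (p j) (b ! j) * H (b[j := 0])" by simp
  also have "coeff (p j) (b ! j) * H (b[j := 0]) =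
     (if \<forall>l<k. l \<notin> set (j # js) \<longrightarrow> b ! l = 0 then \<Prod>i\<in>set (j # js). coeff (p i) (b ! i) else 0)"
  proof -
    have upd: "b[j := 0] ! l = (if l = j then 0 else b ! l)" if "l < k" for l
      using that Cons.prems(1) by (simp add: nth_list_update)
    have c1: "(\<forall>l<k. l \<notin> set js \<longrightarrow> b[j := 0] ! l = 0) \<longleftrightarrow> (\<forall>l<k. l \<notin> set (j # js) \<longrightarrow> b ! l = 0)"
      using upd by auto
    have c2: "(\<Prod>i\<in>set js. coeff (p i) (b[j := 0] ! i)) = (\<Prod>i\<in>set js. coeff (p i) (b ! i))"
      using upd ajs jn by (intro prod.cong refl) auto
    show ?thesis
      using IH[of "b[j := 0]"] Cons.prems(1) c1 c2 jn by (simp add: prod.insert) force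
  qed
  finally show ?case .
qed



lemma prodlem:
  "length b = k \<Longrightarrow> mps_prod_list k (map (\<lambda>j. mps_upoly k j (p j)) [0..<k]) b = (\<Prod>j<k. coeff (p j) (b ! j))"
  unfolding mps_prod_list_def using foldr_upoly[of "[0..<k]" k b p] by (simp add: atLeast0LessThan)

definition pwz :: "nat list \<Rightarrow> nat list \<Rightarrow> int list" where
  "pwz I a = concat (map (\<lambda>(i,e). replicate e (int i)) (zip I a))"

lemma pow_word_pwz: "length a = length I \<Longrightarrow> pow_word I a = pwz I a"
  unfolding pow_word_def pwz_def
  by (rule arg_cong[where f = concat]) (rule nth_equalityI, auto)

lemma pwz_split: "length I1 = length l1 \<Longrightarrow>
    pwz (I1 @ i # I2) (l1 @ m # l2) = pwz I1 l1 @ replicate m (int i) @ pwz I2 l2"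
  by (simp add: pwz_def zip_append)

lemma set_pwz: "x \<in> set (pwz I a) \<Longrightarrow> \<exists>i\<in>set I. x = int i"
  by (auto simp: pwz_def dest: set_zip_leftD)

lemma series_rec:
  assumes n: "n \<ge> 2" and I: "\<forall>i \<in> set I. 1 \<le> i \<and> i \<le> n - 1"
    and len: "length l1 + length l2 + 1 = length I"
  shows "jones_series n I (l1 @ (e + 2) # l2) =
    (jS^3 - jS) * jones_series n I (l1 @ (e + 1) # l2) + jS^4 * jones_series n I (l1 @ e # l2)"
proof -
  define j where "j = length l1"
  define I1 where "I1 = take j I"
  define I2 where "I2 = drop (Suc j) I"
  define i where "i = I ! j"
  have jI: "j < length I" using len by (simp add: j_def)
  have Ieq: "I = I1 @ i # I2" unfolding I1_def I2_def i_def using jI by (simp add: id_take_nth_drop)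
  have lI1: "length I1 = length l1" using jI by (simp add: I1_def j_def)
  define P1 where "P1 = pwz I1 l1"
  define P2 where "P2 = pwz I2 l2"
  define g where "g = int i"
  have pw: "pow_word I (l1 @ m # l2) = P1 @ replicate m g @ P2" for m
  proof -
    have "length (l1 @ m # l2) = length I" using len by simp
    then show ?thesis unfolding pow_word_pwz[OF \<open>length (l1 @ m # l2) = length I\<close>]
      by (subst (1) Ieq) (simp add: pwz_split[OF lI1] P1_def P2_def g_def)
  qed
  have bdI: "1 \<le> i' \<and> i' < n" if "i' \<in> set I" for i' using I that n by fastforce
  have bd: "\<forall>y\<in>set (P1 @ replicate e g) \<union> set P2 \<union> {g}. 1 \<le> braid_gen y \<and> braid_gen y < n"
  proof
    fix y assume "y \<in> set (P1 @ replicate e g) \<union> set P2 \<union> {g}"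
    moreover have "i \<in> set I" using jI by (simp add: i_def)
    moreover have "set I1 \<subseteq> set I" "set I2 \<subseteq> set I"
      by (auto simp: I1_def I2_def dest: in_set_takeD in_set_dropD)
    ultimately have "\<exists>i'\<in>set I. y = int i'"
      using set_pwz[of y I1 l1] set_pwz[of y I2 l2] unfolding P1_def P2_def g_def
      by (auto dest: in_set_replicate[THEN iffD1])
    then show "1 \<le> braid_gen y \<and> braid_gen y < n" using bdI by (auto simp: braid_gen_def)
  qed
  have gp: "0 < g" using bdI[of i] jI by (simp add: g_def i_def)
  have r2: "replicate (e + 2) g = replicate e g @ [g, g]" by (simp add: replicate_append_same[symmetric] numeral_2_eq_2)
  have r1: "replicate (e + 1) g = replicate e g @ [g]" by (simp add: replicate_append_same)
  show ?thesis
    unfolding jones_series_def pw r2 r1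
    using jones_rec[OF bd gp] by simp
qed

theorem theorem1p3:
  fixes n k :: nat and I :: "nat list"
  assumes "n \<ge> 2" and "k \<ge> 1" and "length I = k"
    and "\<forall>i \<in> set I. 1 \<le> i \<and> i \<le> n - 1"
  shows "mps_eq k
           (mps_mult k (mps_prod_list k (map (\<lambda>j. mps_upoly k j q_poly) [0..<k]))
                       (jones_series n I))
           (\<lambda>a. \<Sum>J \<in> {J :: nat list. length J = k \<and> set J \<subseteq> {0, 1}}.
              mps_smult (jones_braid n (pow_word I J))
                        (mps_prod_list k (map (\<lambda>j. mps_upoly k j (Q_poly (J ! j))) [0..<k])) a)"
  unfolding mps_eq_def
proof (intro allI impI)
  fix a :: "nat list" assume la: "length a = k"
  define F where "F = jones_series n I"
  have rec: "F (l1 @ (e + 2) # l2) = (jS^3 - jS) * F (l1 @ (e + 1) # l2) + jS^4 * F (l1 @ e # l2)"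
    if "length l1 + length l2 + 1 = length a" for l1 l2 e
    unfolding F_def using series_rec[OF assms(1) assms(4)] that la assms(3) by simp
  have "mps_mult k (mps_prod_list k (map (\<lambda>j. mps_upoly k j q_poly) [0..<k])) F a
      = (\<Sum>b\<in>Bs a. prod_list (map (coeff q_poly) b) * F (map2 (-) a b))"
    unfolding mps_mult_def
  proof (rule sum.cong)
    show "{b. length b = k \<and> (\<forall>j<k. b ! j \<le> a ! j)} = Bs a"
      using la by (auto simp: Bs_def list_all2_conv_all_nth)
    fix b assume "b \<in> Bs a"
    then have lb: "length b = k" using la by (simp add: Bs_def)
    have "mps_prod_list k (map (\<lambda>j. mps_upoly k j q_poly) [0..<k]) b = prod_list (map (coeff q_poly) b)"
      using prodlem[OF lb, of "\<lambda>_. q_poly"] lb by (simp add: prod_list_nth)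
    moreover have "map (\<lambda>j. a ! j - b ! j) [0..<k] = map2 (-) a b"
      by (rule nth_equalityI) (auto simp: la lb)
    ultimately show "mps_prod_list k (map (\<lambda>j. mps_upoly k j q_poly) [0..<k]) b * F (map (\<lambda>j. a ! j - b ! j) [0..<k])
        = prod_list (map (coeff q_poly) b) * F (map2 (-) a b)" by simp
  qed
  also have "\<dots> = (\<Sum>J\<in>Js (length a). F J * prod_list (map2 (\<lambda>z x. coeff (Q_poly z) x) J a))"
    by (rule main_series) (rule rec)
  also have "\<dots> = (\<Sum>J \<in> {J :: nat list. length J = k \<and> set J \<subseteq> {0, 1}}.
              mps_smult (jones_braid n (pow_word I J))
                        (mps_prod_list k (map (\<lambda>j. mps_upoly k j (Q_poly (J ! j))) [0..<k])) a)"
    unfolding Js_def la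
  proof (rule sum.cong[OF refl])
    fix J assume "J \<in> {J :: nat list. length J = k \<and> set J \<subseteq> {0, 1}}"
    then have lJ: "length J = k" by simp
    have "mps_prod_list k (map (\<lambda>j. mps_upoly k j (Q_poly (J ! j))) [0..<k]) a
        = prod_list (map2 (\<lambda>z x. coeff (Q_poly z) x) J a)"
      using prodlem[OF la, of "\<lambda>j. Q_poly (J ! j)"] la lJ by (simp add: prod_list_nth)
    then show "F J * prod_list (map2 (\<lambda>z x. coeff (Q_poly z) x) J a) =
      mps_smult (jones_braid n (pow_word I J)) (mps_prod_list k (map (\<lambda>j. mps_upoly k j (Q_poly (J ! j))) [0..<k])) a"
      by (simp add: mps_smult_def F_def jones_series_def)
  qed
  finally show "mps_mult k (mps_prod_list k (map (\<lambda>j. mps_upoly k j q_poly) [0..<k])) (jones_series n I) a =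
    (\<Sum>J \<in> {J :: nat list. length J = k \<and> set J \<subseteq> {0, 1}}.
              mps_smult (jones_braid n (pow_word I J))
                        (mps_prod_list k (map (\<lambda>j. mps_upoly k j (Q_poly (J ! j))) [0..<k])) a)"
    unfolding F_def .
qed


end
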